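(* The GreedyEJR-M rule is well-defined, always terminates, and for every instance returns a bundle $R'$ with $s(R')\le\alpha$ that satisfies EJR-M (and therefore EJR-1). In particular, an EJR-M allocation exists in every instance.
   Context: Model: There is a set of agents $N=\{1,\dots,n\}$. The resource $R$ consists of a cake $C=[0,c]$ for a real $c\ge 0$ and a set of indivisible goods $G=\{g_1,\dots,g_m\}$ for an integer $m\ge 0$, with $\max(c,m)>0$. A piece of cake is a union of finitely many disjoint closed subintervals of $C$; its length $\ell(\cdot)$ is the sum of the lengths of its intervals. A bundle $R'=(C',G')$ consists of a piece of cake $C'\subseteq C$ and a set $G'\subseteq G$; its size is $s(R')=\ell(C')+|G'|$. Each agent $i$ approves a bundle $R_i=(C_i,G_i)$, and her utility for a bundle $R'$ is $u_i(R')=\ell(C_i\cap C')+|G_i\cap G'|$. A parameter $\alpha\in(0,c+m]$ is given; an allocation is a bundle $A$ with $s(A)\le\alpha$. For a real $t\ge 0$, a group $N^*\subseteq N$ is $t$-cohesive if $|N^*|\ge t\cdot n/\alpha$ and $s(\bigcap_{i\in N^*}R_i)\ge t$. EJR-M: an allocation $A$ satisfies EJR-M if for every real $t>0$ and every $t$-cohesive group $N^*$ for which there exists a bundle $R^*\subseteq R$ with $s(R^* )=t$ and $R^*\subseteq R_i$ for all $i\in N^*$, there is $j\in N^*$ with $u_j(A)\ge t$. EJR-1: for every real $t>0$ and every $t$-cohesive $N^*$, some $j\in N^*$ has $u_j(A)>t-1$. GreedyEJR-M rule: Step 1: set $N'=N$, $R'=\emptyset$. Step 2: let $t^*$ be the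 largest nonnegative real for which there exist a nonempty $N^*\subseteq N'$ and a bundle $R^*\subseteq R$ such that $N^*$ is $t^*$-cohesive, $R^*\subseteq R_i$ for all $i\in N^*$, and $s(R^* )=t^*$; take any such pair $(N^*,R^* )$, remove $N^*$ from $N'$, and add to $R'$ the part of $R^*$ not already in $R'$. Step 3: if $N'=\emptyset$ return $R'$; otherwise go to Step 2. *)

theory Defs
  imports "HOL-Analysis.Analysis"
begin

definition is_piece :: "real \<Rightarrow> real set \<Rightarrow> bool" where
  "is_piece c P \<longleftrightarrow> P \<subseteq> {0..c} \<and>
     (\<exists>I :: (real \<times> real) set. finite I \<and> (\<forall>(a,b)\<in>I. a \<le> b) \<and>
        pairwise (\<lambda>(a,b) (a',b'). {a..b} \<inter> {a'..b'} = {}) I \<and>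
        P = (\<Union>(a,b)\<in>I. {a..b}))"

definition piece_len :: "real set \<Rightarrow> real" where
  "piece_len P = measure lborel P"

type_synonym 'g bndl = "real set \<times> 'g set"

definition is_bundle :: "real \<Rightarrow> 'g set \<Rightarrow> 'g bndl \<Rightarrow> bool" where
  "is_bundle c G B \<longleftrightarrow> is_piece c (fst B) \<and> snd B \<subseteq> G"

definition bsize :: "'g bndl \<Rightarrow> real" where
  "bsize B = piece_len (fst B) + real (card (snd B))"

definition util :: "'g bndl \<Rightarrow> 'g bndl \<Rightarrow> real" where
  "util Ri B = piece_len (fst Ri \<inter> fst B) + real (card (snd Ri \<inter> snd B))"

definition bsub :: "'g bndl \<Rightarrow> 'g bndl \<Rightarrow> bool" where
  "bsub B B' \<longleftrightarrow> fst B \<subseteq> fst B' \<and> snd B \<subseteq> snd B'"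

text \<open>Intersection of the approved bundles of a group (within the resource).\<close>
definition common :: "real \<Rightarrow> 'g set \<Rightarrow> ('a \<Rightarrow> 'g bndl) \<Rightarrow> 'a set \<Rightarrow> 'g bndl" where
  "common c G R S = ({0..c} \<inter> (\<Inter>i\<in>S. fst (R i)), G \<inter> (\<Inter>i\<in>S. snd (R i)))"

definition cohesive ::
  "real \<Rightarrow> 'g set \<Rightarrow> real \<Rightarrow> 'a set \<Rightarrow> ('a \<Rightarrow> 'g bndl) \<Rightarrow> real \<Rightarrow> 'a set \<Rightarrow> bool" where
  "cohesive c G \<alpha> N R t S \<longleftrightarrow> S \<subseteq> N \<and> real (card S) \<ge> t * real (card N) / \<alpha>
      \<and> bsize (common c G R S) \<ge> t"

definition EJR_M ::
  "real \<Rightarrow> 'g set \<Rightarrow> real \<Rightarrow> 'a set \<Rightarrow> ('a \<Rightarrow> 'g bndl) \<Rightarrow> 'g bndl \<Rightarrow> bool" where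
  "EJR_M c G \<alpha> N R A \<longleftrightarrow>
     (\<forall>t S. t > 0 \<and> cohesive c G \<alpha> N R t S \<and>
        (\<exists>B. is_bundle c G B \<and> bsize B = t \<and> (\<forall>i\<in>S. bsub B (R i)))
        \<longrightarrow> (\<exists>j\<in>S. util (R j) A \<ge> t))"

definition EJR_1 ::
  "real \<Rightarrow> 'g set \<Rightarrow> real \<Rightarrow> 'a set \<Rightarrow> ('a \<Rightarrow> 'g bndl) \<Rightarrow> 'g bndl \<Rightarrow> bool" where
  "EJR_1 c G \<alpha> N R A \<longleftrightarrow>
     (\<forall>t S. t > 0 \<and> cohesive c G \<alpha> N R t S \<longrightarrow> (\<exists>j\<in>S. util (R j) A > t - 1))"

text \<open>GreedyEJR-M. A state is (remaining agents N', current bundle R').\<close>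

definition greedy_feasible ::
  "real \<Rightarrow> 'g set \<Rightarrow> real \<Rightarrow> 'a set \<Rightarrow> ('a \<Rightarrow> 'g bndl) \<Rightarrow> 'a set \<Rightarrow> real \<Rightarrow> 'a set \<Rightarrow> 'g bndl \<Rightarrow> bool" where
  "greedy_feasible c G \<alpha> N R N' t S B \<longleftrightarrow> S \<noteq> {} \<and> S \<subseteq> N' \<and> cohesive c G \<alpha> N R t S
     \<and> is_bundle c G B \<and> (\<forall>i\<in>S. bsub B (R i)) \<and> bsize B = t"

definition greedy_tstar ::
  "real \<Rightarrow> 'g set \<Rightarrow> real \<Rightarrow> 'a set \<Rightarrow> ('a \<Rightarrow> 'g bndl) \<Rightarrow> 'a set \<Rightarrow> real \<Rightarrow> bool" where
  "greedy_tstar c G \<alpha> N R N' t \<longleftrightarrow> t \<ge> 0 \<and> (\<exists>S B. greedy_feasible c G \<alpha> N R N' t S B) \<and>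
     (\<forall>t'. t' \<ge> 0 \<and> (\<exists>S B. greedy_feasible c G \<alpha> N R N' t' S B) \<longrightarrow> t' \<le> t)"

definition greedy_step ::
  "real \<Rightarrow> 'g set \<Rightarrow> real \<Rightarrow> 'a set \<Rightarrow> ('a \<Rightarrow> 'g bndl) \<Rightarrow>
   'a set \<times> 'g bndl \<Rightarrow> 'a set \<times> 'g bndl \<Rightarrow> bool" where
  "greedy_step c G \<alpha> N R st st' \<longleftrightarrow> fst st \<noteq> {} \<and>
     (\<exists>t S B. greedy_tstar c G \<alpha> N R (fst st) t \<and> greedy_feasible c G \<alpha> N R (fst st) t S B \<and>
        st' = (fst st - S, (fst (snd st) \<union> fst B, snd (snd st) \<union> snd B)))"

end

theory Submission
  imports Defs
begin


definition rep :: "(real \<times> real) set \<Rightarrow> real set \<Rightarrow> bool" where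
  "rep I P \<longleftrightarrow> finite I \<and> (\<forall>(a,b)\<in>I. a \<le> b) \<and>
        pairwise (\<lambda>(a,b) (a',b'). {a..b} \<inter> {a'..b'} = {}) I \<and>
        P = (\<Union>(a,b)\<in>I. {a..b})"

lemma is_piece_rep: "is_piece c P \<longleftrightarrow> P \<subseteq> {0..c} \<and> (\<exists>I. rep I P)"
  unfolding is_piece_def rep_def by blast

lemma rep_pw: "rep I P \<Longrightarrow> p \<in> I \<Longrightarrow> q \<in> I \<Longrightarrow> p \<noteq> q \<Longrightarrow> {fst p..snd p} \<inter> {fst q..snd q} = {}"
  unfolding rep_def using pairwiseD(1)[of "\<lambda>(a,b) (a',b'). {a..b} \<inter> {a'..b'} = {}" I p q]
  by (auto simp: case_prod_beta)

lemma rep_compact: "rep I P \<Longrightarrow> compact P"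
  unfolding rep_def by (auto intro!: compact_UN)

lemma piece_compact: "is_piece c P \<Longrightarrow> compact P"
  using is_piece_rep rep_compact by blast

lemma piece_fmeas: "is_piece c P \<Longrightarrow> P \<in> fmeasurable lborel"
  using piece_compact fmeasurable_compact by blast

lemma piece_sets: "is_piece c P \<Longrightarrow> P \<in> sets lborel"
  using piece_fmeas by blast

lemma rep_Int:
  assumes "rep I P" "rep I' Q"
  shows "\<exists>J. rep J (P \<inter> Q)"
proof -
  define f where "f = (\<lambda>((a::real,b::real),(a'::real,b'::real)). (max a a', min b b'))"
  define K where "K = {pq \<in> I \<times> I'. fst (f pq) \<le> snd (f pq)}"
  define J where "J = f ` K"
  have fin: "finite J" using assms unfolding J_def K_def rep_def by auto
  have le: "\<forall>(a,b)\<in>J. a \<le> b" unfolding J_def K_def by auto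
  have sub: "\<And>pq. pq \<in> K \<Longrightarrow> {fst (f pq)..snd (f pq)} = {fst (fst pq)..snd (fst pq)} \<inter> {fst (snd pq)..snd (snd pq)}"
    unfolding f_def by (auto split: prod.splits)
  have pw: "pairwise (\<lambda>(a,b) (a',b'). {a..b} \<inter> {a'..b'} = {}) J"
    unfolding pairwise_def
  proof (intro ballI impI)
    fix x y assume x: "x \<in> J" and y: "y \<in> J" and ne: "x \<noteq> y"
    obtain p q where pq: "(p,q) \<in> K" "x = f (p,q)" using x unfolding J_def by auto
    obtain p' q' where pq': "(p',q') \<in> K" "y = f (p',q')" using y unfolding J_def by auto
    have X: "{fst x..snd x} = {fst p..snd p} \<inter> {fst q..snd q}" using sub[OF pq(1)] pq(2) by simp
    have Y: "{fst y..snd y} = {fst p'..snd p'} \<inter> {fst q'..snd q'}" using sub[OF pq'(1)] pq'(2) by simp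
    have "p \<noteq> p' \<or> q \<noteq> q'" using ne pq pq' by auto
    then have "{fst x..snd x} \<inter> {fst y..snd y} = {}"
    proof
      assume "p \<noteq> p'"
      moreover have "p \<in> I" "p' \<in> I" using pq pq' unfolding K_def by auto
      ultimately have "{fst p..snd p} \<inter> {fst p'..snd p'} = {}"
        using rep_pw[OF assms(1)] by blast
      then show ?thesis using X Y by blast
    next
      assume "q \<noteq> q'"
      moreover have "q \<in> I'" "q' \<in> I'" using pq pq' unfolding K_def by auto
      ultimately have "{fst q..snd q} \<inter> {fst q'..snd q'} = {}"
        using rep_pw[OF assms(2)] by blast
      then show ?thesis using X Y by blast
    qed
    then show "(\<lambda>(a,b) (a',b'). {a..b} \<inter> {a'..b'} = {}) x y" by (simp add: case_prod_beta)
  qed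
  have un: "P \<inter> Q = (\<Union>(a,b)\<in>J. {a..b})"
  proof
    show "P \<inter> Q \<subseteq> (\<Union>(a,b)\<in>J. {a..b})"
    proof
      fix z assume "z \<in> P \<inter> Q"
      then obtain p q where "p \<in> I" "q \<in> I'" "z \<in> {fst p..snd p}" "z \<in> {fst q..snd q}"
        using assms unfolding rep_def by auto
      then have "(p,q) \<in> K" "z \<in> {fst (f (p,q))..snd (f (p,q))}"
        unfolding K_def f_def by (auto split: prod.splits)
      then show "z \<in> (\<Union>(a,b)\<in>J. {a..b})" unfolding J_def by force
    qed
  next
    show "(\<Union>(a,b)\<in>J. {a..b}) \<subseteq> P \<inter> Q"
    proof
      fix z assume "z \<in> (\<Union>(a,b)\<in>J. {a..b})"
      then obtain x where x: "x \<in> J" "z \<in> {fst x..snd x}" by (auto simp: case_prod_beta)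
      then obtain pq where pq: "pq \<in> K" "z \<in> {fst (f pq)..snd (f pq)}" unfolding J_def by blast
      then have "fst pq \<in> I" "snd pq \<in> I'" unfolding K_def by auto
      moreover have "z \<in> {fst (fst pq)..snd (fst pq)}" "z \<in> {fst (snd pq)..snd (snd pq)}"
        using sub[OF pq(1)] pq(2) by auto
      ultimately show "z \<in> P \<inter> Q" using assms unfolding rep_def by force
    qed
  qed
  show ?thesis using fin le pw un unfolding rep_def by blast
qed

lemma piece_Int: "is_piece c P \<Longrightarrow> is_piece c Q \<Longrightarrow> is_piece c (P \<inter> Q)"
  using rep_Int is_piece_rep by (metis Int_absorb1 le_infI1)



lemma ivl_merge:
  fixes lo hi a b a' b' :: real
  assumes "lo \<le> a" "b \<le> hi" "a \<le> b" "a' \<le> b'" "{a'..b'} \<inter> {a..b} \<noteq> {}"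
  shows "{lo..hi} \<union> {a'..b'} = {min lo a'..max hi b'}"
proof -
  have "a' \<le> b" "a \<le> b'" using assms(5) by auto
  then show ?thesis using assms(1-4) by (auto simp: min_def max_def)
qed

lemma merge:
  fixes a b :: real
  assumes "finite J" "\<forall>p\<in>J. fst p \<le> snd p \<and> {fst p..snd p} \<inter> {a..b} \<noteq> {}" "a \<le> b"
  shows "\<exists>lo hi. lo \<le> a \<and> b \<le> hi \<and> {lo..hi} = {a..b} \<union> (\<Union>p\<in>J. {fst p..snd p})"
  using assms
proof (induction J rule: finite_induct)
  case empty
  then show ?case by auto
next
  case (insert p J)
  then obtain lo hi where h: "lo \<le> a" "b \<le> hi" "{lo..hi} = {a..b} \<union> (\<Union>p\<in>J. {fst p..snd p})" by auto
  have "{lo..hi} \<union> {fst p..snd p} = {min lo (fst p)..max hi (snd p)}"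
    using ivl_merge[OF h(1,2) insert(5)] insert(4) by auto
  then show ?case using h by (intro exI[of _ "min lo (fst p)"] exI[of _ "max hi (snd p)"]) auto
qed

lemma rep_insert:
  fixes a b :: real
  assumes "rep I P" "a \<le> b"
  shows "\<exists>K. rep K ({a..b} \<union> P)"
proof -
  define J where "J = {p\<in>I. {fst p..snd p} \<inter> {a..b} \<noteq> {}}"
  have fin: "finite I" using assms unfolding rep_def by auto
  have le: "\<forall>p\<in>I. fst p \<le> snd p" using assms unfolding rep_def by auto
  have "finite J" using fin unfolding J_def by auto
  moreover have "\<forall>p\<in>J. fst p \<le> snd p \<and> {fst p..snd p} \<inter> {a..b} \<noteq> {}"
    using le unfolding J_def by blast
  ultimately obtain lo hi where h: "lo \<le> a" "b \<le> hi" "{lo..hi} = {a..b} \<union> (\<Union>p\<in>J. {fst p..snd p})"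
    using merge[of J a b] assms(2) by blast
  define K where "K = insert (lo,hi) (I - J)"
  have Pe: "P = (\<Union>p\<in>I. {fst p..snd p})" using assms unfolding rep_def by (auto simp: case_prod_beta)
  have "finite K" using fin unfolding K_def by auto
  moreover have "\<forall>(a,b)\<in>K. a \<le> b" using le h assms(2) unfolding K_def by auto
  moreover have "pairwise (\<lambda>(a,b) (a',b'). {a..b} \<inter> {a'..b'} = {}) K"
    unfolding pairwise_def
  proof (intro ballI impI)
    fix x y assume x: "x \<in> K" and y: "y \<in> K" and ne: "x \<noteq> y"
    have D: "{fst q..snd q} \<inter> {lo..hi} = {}" if q: "q \<in> I - J" for q
    proof -
      have "{fst q..snd q} \<inter> {a..b} = {}" using q unfolding J_def by auto
      moreover have "{fst q..snd q} \<inter> {fst p..snd p} = {}" if "p \<in> J" for p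
        using rep_pw[OF assms(1), of q p] q that unfolding J_def by auto
      ultimately show ?thesis using h(3) by blast
    qed
    have "{fst x..snd x} \<inter> {fst y..snd y} = {}"
    proof (cases "x = (lo,hi)")
      case True
      then have "y \<in> I - J" using y ne unfolding K_def by auto
      then show ?thesis using D True by auto
    next
      case False
      then have xI: "x \<in> I - J" using x unfolding K_def by auto
      show ?thesis
      proof (cases "y = (lo,hi)")
        case True then show ?thesis using D xI by auto
      next
        case False
        then have "y \<in> I - J" using y unfolding K_def by auto
        then show ?thesis using rep_pw[OF assms(1), of x y] xI ne by auto
      qed
    qed
    then show "(\<lambda>(a,b) (a',b'). {a..b} \<inter> {a'..b'} = {}) x y" by (simp add: case_prod_beta)
  qed
  moreover have "{a..b} \<union> P = (\<Union>(a,b)\<in>K. {a..b})"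
  proof -
    have "(\<Union>(a,b)\<in>K. {a..b}) = {lo..hi} \<union> (\<Union>p\<in>I-J. {fst p..snd p})"
      unfolding K_def by (auto simp: case_prod_beta)
    also have "\<dots> = {a..b} \<union> (\<Union>p\<in>J. {fst p..snd p}) \<union> (\<Union>p\<in>I-J. {fst p..snd p})" using h by simp
    also have "\<dots> = {a..b} \<union> P" unfolding Pe J_def by blast
    finally show ?thesis by simp
  qed
  ultimately show ?thesis unfolding rep_def by blast
qed

lemma rep_Un_gen:
  assumes "finite I'" "\<forall>(a,b)\<in>I'. a \<le> b" "rep I P"
  shows "\<exists>K. rep K (P \<union> (\<Union>(a,b)\<in>I'. {a..b}))"
  using assms
proof (induction I' arbitrary: I P rule: finite_induct)
  case empty then show ?case by auto
next
  case (insert p I')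
  have "\<exists>K. rep K (P \<union> (\<Union>(a,b)\<in>I'. {a..b}))" using insert.IH[of I P] insert.prems by auto
  then obtain K where K: "rep K (P \<union> (\<Union>(a,b)\<in>I'. {a..b}))" by blast
  obtain K' where "rep K' ({fst p..snd p} \<union> (P \<union> (\<Union>(a,b)\<in>I'. {a..b})))"
    using rep_insert[OF K, of "fst p" "snd p"] insert.prems by (auto simp: case_prod_beta)
  moreover have "{fst p..snd p} \<union> (P \<union> (\<Union>(a,b)\<in>I'. {a..b})) = P \<union> (\<Union>(a,b)\<in>insert p I'. {a..b})"
    by (auto simp: case_prod_beta)
  ultimately show ?case by metis
qed

lemma piece_Un: "is_piece c P \<Longrightarrow> is_piece c Q \<Longrightarrow> is_piece c (P \<union> Q)"
  unfolding is_piece_rep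
proof (elim conjE exE)
  fix I I' assume "P \<subseteq> {0..c}" "rep I P" "Q \<subseteq> {0..c}" "rep I' Q"
  moreover have "Q = (\<Union>(a,b)\<in>I'. {a..b})" "finite I'" "\<forall>(a,b)\<in>I'. a \<le> b"
    using \<open>rep I' Q\<close> unfolding rep_def by auto
  ultimately show "P \<union> Q \<subseteq> {0..c} \<and> (\<exists>I. rep I (P \<union> Q))"
    using rep_Un_gen[of I' I P] by auto
qed

lemma piece_empty: "is_piece c {}"
  unfolding is_piece_rep rep_def by (intro conjI exI[of _ "{}"]) auto

lemma piece_Icc: "0 \<le> y \<Longrightarrow> y \<le> c \<Longrightarrow> is_piece c {0..y}"
  unfolding is_piece_rep rep_def by (intro conjI exI[of _ "{(0,y)}"]) auto



lemma lip_step: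
  assumes Q: "is_piece c Q" and "y \<le> y'"
  shows "measure lborel (Q \<inter> {0..y}) \<le> measure lborel (Q \<inter> {0..y'})"
    and "measure lborel (Q \<inter> {0..y'}) \<le> measure lborel (Q \<inter> {0..y}) + (y' - y)"
proof -
  have cQ: "compact Q" using piece_compact[OF Q] .
  have c1: "compact (Q \<inter> {0..y})" "compact (Q \<inter> {0..y'})" using cQ by auto
  have f1: "Q \<inter> {0..y} \<in> fmeasurable lborel" "Q \<inter> {0..y'} \<in> fmeasurable lborel"
    "(Q \<inter> {0..y}) \<union> {y..y'} \<in> fmeasurable lborel"
    using c1 fmeasurable_compact compact_Un[OF c1(1) compact_Icc] by blast+
  have s1: "Q \<inter> {0..y} \<in> sets lborel" "Q \<inter> {0..y'} \<in> sets lborel"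
    using f1 fmeasurableD by blast+
  show "measure lborel (Q \<inter> {0..y}) \<le> measure lborel (Q \<inter> {0..y'})"
    by (rule measure_mono_fmeasurable[OF _ s1(1) f1(2)]) (use assms in auto)
  have "measure lborel (Q \<inter> {0..y'}) \<le> measure lborel ((Q \<inter> {0..y}) \<union> {y..y'})"
    by (rule measure_mono_fmeasurable[OF _ s1(2) f1(3)]) (use assms in auto)
  also have "\<dots> \<le> measure lborel (Q \<inter> {0..y}) + measure lborel {y..y'}"
    using measure_Un_le[OF s1(1), of "{y..y'}"] by simp
  also have "\<dots> = measure lborel (Q \<inter> {0..y}) + (y' - y)" using assms by simp
  finally show "measure lborel (Q \<inter> {0..y'}) \<le> measure lborel (Q \<inter> {0..y}) + (y' - y)" .
qed

lemma sub_piece: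
  assumes Q: "is_piece c Q" and c: "0 \<le> c" and x: "0 \<le> x" "x \<le> piece_len Q"
  shows "\<exists>P. is_piece c P \<and> P \<subseteq> Q \<and> piece_len P = x"
proof -
  define f where "f y = measure lborel (Q \<inter> {0..y})" for y
  have "1-lipschitz_on {0..c} f"
  proof (rule lipschitz_onI)
    fix y y' assume "y \<in> {0..c}" "y' \<in> {0..c}"
    show "dist (f y) (f y') \<le> 1 * dist y y'"
    proof (cases "y \<le> y'")
      case True
      then show ?thesis using lip_step[OF Q True] unfolding f_def dist_real_def by auto
    next
      case False
      then have yy: "y' \<le> y" by auto
      then show ?thesis using lip_step[OF Q yy] unfolding f_def dist_real_def by auto
    qed
  qed auto
  then have cont: "continuous_on {0..c} f" by (rule lipschitz_on_continuous_on)
  have f0: "f 0 \<le> x"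
  proof -
    have "compact (Q \<inter> {0..0})" using piece_compact[OF Q] by auto
    then have "Q \<inter> {0..0} \<in> sets lborel" using fmeasurable_compact fmeasurableD by blast
    then have "f 0 \<le> measure lborel {0..0::real}" unfolding f_def
      using measure_mono_fmeasurable[of "Q \<inter> {0..0}" "{0..0}" lborel] fmeasurable_compact[of "{0..0::real}"] by auto
    then show ?thesis using x by simp
  qed
  have fc: "x \<le> f c"
  proof -
    have "Q \<subseteq> {0..c}" using Q is_piece_rep by blast
    then have "Q \<inter> {0..c} = Q" by blast
    then show ?thesis using x unfolding f_def piece_len_def by simp
  qed
  obtain y where y: "0 \<le> y" "y \<le> c" "f y = x" using IVT'[of f 0 x c, OF f0 fc c cont] by blast
  show ?thesis
    apply (rule exI[of _ "Q \<inter> {0..y}"])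
    using piece_Int[OF Q piece_Icc[OF y(1,2)]] y(3) unfolding f_def piece_len_def by auto
qed

lemma common_bundle:
  assumes "finite S" "\<forall>i\<in>S. is_bundle c G (R i)" "0 \<le> c"
  shows "is_bundle c G (common c G R S)"
  using assms
proof (induction S rule: finite_induct)
  case empty
  then show ?case unfolding common_def is_bundle_def using piece_Icc[of c c] by auto
next
  case (insert i S)
  then have "is_piece c (fst (common c G R S))" "is_piece c (fst (R i))" unfolding is_bundle_def by auto
  from piece_Int[OF this(2,1)] show ?case unfolding common_def is_bundle_def
    by (simp add: Int_left_commute)
qed

lemma piece_len_nonneg: "piece_len P \<ge> 0" unfolding piece_len_def by simp

lemma piece_len_mono: "is_piece c P \<Longrightarrow> is_piece c' Q \<Longrightarrow> P \<subseteq> Q \<Longrightarrow> piece_len P \<le> piece_len Q"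
  unfolding piece_len_def using measure_mono_fmeasurable piece_sets piece_fmeas by blast

lemma piece_len_Un: "is_piece c P \<Longrightarrow> is_piece c' Q \<Longrightarrow> piece_len (P \<union> Q) \<le> piece_len P + piece_len Q"
  unfolding piece_len_def using measure_Un_le piece_sets by blast



definition sizes :: "real \<Rightarrow> 'g set \<Rightarrow> ('a \<Rightarrow> 'g bndl) \<Rightarrow> 'a set \<Rightarrow> real set" where
  "sizes c G R S = {t. \<exists>B. is_bundle c G B \<and> (\<forall>i\<in>S. bsub B (R i)) \<and> bsize B = t}"

lemma bundle_in_common:
  assumes "is_bundle c G B" "\<forall>i\<in>S. bsub B (R i)"
  shows "fst B \<subseteq> fst (common c G R S)" "snd B \<subseteq> snd (common c G R S)"
  using assms is_piece_rep unfolding is_bundle_def bsub_def common_def by auto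

lemma sizes_eq:
  assumes "0 \<le> c" "finite G" "finite S" "\<forall>i\<in>S. is_bundle c G (R i)"
  shows "sizes c G R S = (\<Union>k\<in>{0..card (snd (common c G R S))}.
            {real k..real k + piece_len (fst (common c G R S))})"
proof -
  let ?C = "common c G R S"
  have Cb: "is_bundle c G ?C" using common_bundle assms by blast
  have fC: "finite (snd ?C)" using assms(2) unfolding common_def by auto
  show ?thesis
  proof
    show "sizes c G R S \<subseteq> (\<Union>k\<in>{0..card (snd ?C)}. {real k..real k + piece_len (fst ?C)})"
    proof
      fix t assume "t \<in> sizes c G R S"
      then obtain B where B: "is_bundle c G B" "\<forall>i\<in>S. bsub B (R i)" "bsize B = t"
        unfolding sizes_def by auto
      note sub = bundle_in_common[OF B(1,2)]
      have "piece_len (fst B) \<le> piece_len (fst ?C)"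
        using piece_len_mono[of c "fst B" c "fst ?C"] B(1) Cb sub unfolding is_bundle_def by blast
      moreover have "card (snd B) \<le> card (snd ?C)" using card_mono[OF fC sub(2)] .
      moreover have "0 \<le> piece_len (fst B)" by (rule piece_len_nonneg)
      ultimately show "t \<in> (\<Union>k\<in>{0..card (snd ?C)}. {real k..real k + piece_len (fst ?C)})"
        using B(3) unfolding bsize_def by (intro UN_I[of "card (snd B)"]) auto
    qed
  next
    show "(\<Union>k\<in>{0..card (snd ?C)}. {real k..real k + piece_len (fst ?C)}) \<subseteq> sizes c G R S"
    proof
      fix t assume "t \<in> (\<Union>k\<in>{0..card (snd ?C)}. {real k..real k + piece_len (fst ?C)})"
      then obtain k where k: "k \<le> card (snd ?C)" "real k \<le> t" "t \<le> real k + piece_len (fst ?C)"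
        by auto
      obtain T where T: "T \<subseteq> snd ?C" "card T = k" using obtain_subset_with_card_n[OF k(1)] by blast
      have "is_piece c (fst ?C)" using Cb unfolding is_bundle_def by auto
      then obtain P where P: "is_piece c P" "P \<subseteq> fst ?C" "piece_len P = t - k"
        using sub_piece[of c "fst ?C" "t - k"] assms(1) k by auto
      have "is_bundle c G (P, T)" using P T unfolding is_bundle_def common_def by auto
      moreover have "\<forall>i\<in>S. bsub (P, T) (R i)" using P(2) T(1) unfolding bsub_def common_def by auto
      moreover have "bsize (P, T) = t" using P T unfolding bsize_def by simp
      ultimately show "t \<in> sizes c G R S" unfolding sizes_def by blast
    qed
  qed
qed


lemma coh_iff:
  fixes n s \<alpha> t :: real
  assumes "0 < n" "0 < \<alpha>"
  shows "(s \<ge> t * n / \<alpha>) \<longleftrightarrow> (t \<le> s * \<alpha> / n)"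
  using assms by (simp add: field_simps)

lemma tstar_exists:
  assumes c: "0 \<le> c" and G: "finite G" and a: "0 < \<alpha>" and N: "finite N" "N \<noteq> {}"
    and R: "\<forall>i\<in>N. is_bundle c G (R i)"
    and N': "N' \<subseteq> N" "N' \<noteq> {}"
  shows "\<exists>t. greedy_tstar c G \<alpha> N R N' t"
proof -
  let ?n = "real (card N)"
  have n: "0 < ?n" using N by auto
  define T where "T S = sizes c G R S \<inter> {..real (card S) * \<alpha> / ?n} \<inter> {..bsize (common c G R S)}" for S
  define Ss where "Ss = {S. S \<noteq> {} \<and> S \<subseteq> N'}"
  define F where "F = (\<Union>S\<in>Ss. T S)"
  have "finite (Pow N')" using finite_subset[OF N'(1) N(1)] by simp
  moreover have "Ss \<subseteq> Pow N'" unfolding Ss_def by auto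
  ultimately have finS: "finite Ss" using finite_subset by blast
  have SN: "finite S \<and> S \<subseteq> N \<and> S \<noteq> {}" if "S \<in> Ss" for S
  proof -
    have "S \<subseteq> N" "S \<noteq> {}" using that N'(1) unfolding Ss_def by auto
    then show ?thesis using N(1) rev_finite_subset by blast
  qed
  have cT: "compact (T S)" if "S \<in> Ss" for S
  proof -
    have "compact (sizes c G R S)"
      using SN[OF that] R by (subst sizes_eq[OF c G]) (auto intro!: compact_UN)
    then show ?thesis unfolding T_def by (intro compact_Int_closed) auto
  qed
  have cF: "compact F" unfolding F_def using finS cT by (intro compact_UN) auto
  have feas: "(\<exists>S B. greedy_feasible c G \<alpha> N R N' t S B) \<longleftrightarrow> t \<in> F" for t
  proof
    assume "\<exists>S B. greedy_feasible c G \<alpha> N R N' t S B"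
    then obtain S B where "greedy_feasible c G \<alpha> N R N' t S B" by blast
    then have h: "S \<noteq> {}" "S \<subseteq> N'" "cohesive c G \<alpha> N R t S" "is_bundle c G B"
      "\<forall>i\<in>S. bsub B (R i)" "bsize B = t" unfolding greedy_feasible_def by auto
    have "S \<in> Ss" using h unfolding Ss_def by auto
    moreover have "t \<in> T S"
    proof -
      have "t \<in> sizes c G R S" using h unfolding sizes_def by blast
      moreover have "real (card S) \<ge> t * ?n / \<alpha>" "bsize (common c G R S) \<ge> t"
        using h(3) unfolding cohesive_def by auto
      ultimately show ?thesis using coh_iff[OF n a] unfolding T_def by auto
    qed
    ultimately show "t \<in> F" unfolding F_def by blast
  next
    assume "t \<in> F"
    then obtain S where S: "S \<in> Ss" "t \<in> T S" unfolding F_def by blast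
    then obtain B where B: "is_bundle c G B" "\<forall>i\<in>S. bsub B (R i)" "bsize B = t"
      unfolding T_def sizes_def by auto
    have "t \<le> real (card S) * \<alpha> / ?n" "t \<le> bsize (common c G R S)" using S(2) unfolding T_def by auto
    then have "cohesive c G \<alpha> N R t S" using SN[OF S(1)] coh_iff[OF n a] unfolding cohesive_def by auto
    then have "greedy_feasible c G \<alpha> N R N' t S B"
      using S B unfolding greedy_feasible_def Ss_def by auto
    then show "\<exists>S B. greedy_feasible c G \<alpha> N R N' t S B" by blast
  qed
  obtain i where i: "i \<in> N'" using N'(2) by blast
  have "{i} \<in> Ss" unfolding Ss_def using i by auto
  moreover have "0 \<in> T {i}"
  proof -
    have "0 \<in> sizes c G R {i}" using i N'(1) R by (subst sizes_eq[OF c G]) (auto intro!: piece_len_nonneg)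
    moreover have "0 \<le> bsize (common c G R {i})" unfolding bsize_def using piece_len_nonneg[of "fst (common c G R {i})"] by simp
    ultimately show ?thesis unfolding T_def using a n by auto
  qed
  ultimately have z: "0 \<in> F" unfolding F_def by blast
  then obtain ts where ts: "ts \<in> F" "\<forall>t\<in>F. t \<le> ts" using compact_attains_sup[OF cF] by blast
  have "greedy_tstar c G \<alpha> N R N' ts"
    unfolding greedy_tstar_def
  proof (intro conjI allI impI)
    show "0 \<le> ts" using ts z by auto
    show "\<exists>S B. greedy_feasible c G \<alpha> N R N' ts S B" using feas ts(1) by blast
    fix t' assume "0 \<le> t' \<and> (\<exists>S B. greedy_feasible c G \<alpha> N R N' t' S B)"
    then have "t' \<in> F" using feas by blast
    then show "t' \<le> ts" using ts by blast
  qed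
  then show ?thesis by blast
qed



lemma util_nonneg: "util Ri A \<ge> 0"
  unfolding util_def using piece_len_nonneg[of "fst Ri \<inter> fst A"] unfolding piece_len_def by simp

lemma util_self: "bsub B Ri \<Longrightarrow> util Ri B = bsize B"
  unfolding util_def bsize_def bsub_def piece_len_def by (simp add: Int_absorb1)

lemma util_mono:
  assumes "finite G" "is_bundle c G Ri" "is_bundle c G A" "is_bundle c G B"
    "fst B \<subseteq> fst A" "snd B \<subseteq> snd A"
  shows "util Ri B \<le> util Ri A"
proof -
  have p: "is_piece c (fst Ri \<inter> fst B)" "is_piece c (fst Ri \<inter> fst A)"
    using assms piece_Int unfolding is_bundle_def by blast+
  have "piece_len (fst Ri \<inter> fst B) \<le> piece_len (fst Ri \<inter> fst A)"
    using piece_len_mono[OF p] assms(5) by blast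
  moreover have "card (snd Ri \<inter> snd B) \<le> card (snd Ri \<inter> snd A)"
    apply (rule card_mono) using assms unfolding is_bundle_def by (auto intro: finite_subset)
  ultimately show ?thesis unfolding util_def by simp
qed

lemma bsize_Un:
  assumes "finite G" "is_bundle c G A" "is_bundle c G B"
  shows "bsize (fst A \<union> fst B, snd A \<union> snd B) \<le> bsize A + bsize B"
proof -
  have "piece_len (fst A \<union> fst B) \<le> piece_len (fst A) + piece_len (fst B)"
    using piece_len_Un assms unfolding is_bundle_def by blast
  moreover have "card (snd A \<union> snd B) \<le> card (snd A) + card (snd B)" by (rule card_Un_le)
  ultimately show ?thesis unfolding bsize_def by simp
qed

lemma bundle_Un:
  "is_bundle c G A \<Longrightarrow> is_bundle c G B \<Longrightarrow> is_bundle c G (fst A \<union> fst B, snd A \<union> snd B)"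
  unfolding is_bundle_def using piece_Un by auto

definition Inv where
  "Inv c G \<alpha> N R st \<longleftrightarrow> fst st \<subseteq> N \<and> is_bundle c G (snd st) \<and>
     bsize (snd st) * real (card N) \<le> \<alpha> * (real (card N) - real (card (fst st))) \<and>
     (\<forall>t S B. t > 0 \<and> cohesive c G \<alpha> N R t S \<and> is_bundle c G B \<and> bsize B = t \<and>
        (\<forall>i\<in>S. bsub B (R i)) \<longrightarrow> S \<subseteq> fst st \<or> (\<exists>j\<in>S. util (R j) (snd st) \<ge> t))"

lemma coh_nonempty:
  assumes "0 < \<alpha>" "finite N" "N \<noteq> {}" "t > 0" "cohesive c G \<alpha> N R t S"
  shows "S \<noteq> {}"
proof
  assume "S = {}"
  then have "0 \<ge> t * real (card N) / \<alpha>" using assms(5) unfolding cohesive_def by simp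
  moreover have "real (card N) > 0" using assms by auto
  then have "t * real (card N) / \<alpha> > 0" using assms by simp
  ultimately show False by simp
qed

lemma Inv_init:
  assumes "finite N"
  shows "Inv c G \<alpha> N R (N, ({}, {}))"
  unfolding Inv_def is_bundle_def bsize_def piece_len_def cohesive_def
  using piece_empty by auto

lemma Inv_step:
  assumes G: "finite G" and a: "0 < \<alpha>" and N: "finite N" "N \<noteq> {}"
    and R: "\<forall>i\<in>N. is_bundle c G (R i)"
    and I: "Inv c G \<alpha> N R st" and st: "greedy_step c G \<alpha> N R st st'"
  shows "Inv c G \<alpha> N R st'"
proof -
  obtain N' A where stp: "st = (N', A)" by (cases st)
  obtain ts S' B' where ts: "greedy_tstar c G \<alpha> N R N' ts" and fe: "greedy_feasible c G \<alpha> N R N' ts S' B'"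
    and st': "st' = (N' - S', (fst A \<union> fst B', snd A \<union> snd B'))"
  proof -
    obtain ts S' B' where "greedy_tstar c G \<alpha> N R (fst st) ts" "greedy_feasible c G \<alpha> N R (fst st) ts S' B'"
      "st' = (fst st - S', (fst (snd st) \<union> fst B', snd (snd st) \<union> snd B'))"
      using st unfolding greedy_step_def by blast
    then show ?thesis using that unfolding stp by simp
  qed
  have fe': "S' \<noteq> {}" "S' \<subseteq> N'" "cohesive c G \<alpha> N R ts S'" "is_bundle c G B'"
      "\<forall>i\<in>S'. bsub B' (R i)" "bsize B' = ts"
    using fe unfolding greedy_feasible_def by auto
  have I': "N' \<subseteq> N" "is_bundle c G A"
     "bsize A * real (card N) \<le> \<alpha> * (real (card N) - real (card N'))"
     "\<forall>t S B. t > 0 \<and> cohesive c G \<alpha> N R t S \<and> is_bundle c G B \<and> bsize B = t \<and>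
        (\<forall>i\<in>S. bsub B (R i)) \<longrightarrow> S \<subseteq> N' \<or> (\<exists>j\<in>S. util (R j) A \<ge> t)"
    using I unfolding Inv_def stp by auto
  define A' where "A' = (fst A \<union> fst B', snd A \<union> snd B')"
  have A'b: "is_bundle c G A'" unfolding A'_def using bundle_Un I'(2) fe'(4) by blast
  have fN': "finite N'" using rev_finite_subset[OF N(1) I'(1)] .
  have fS': "finite S'" using rev_finite_subset[OF fN' fe'(2)] .
  have c1: "N' - S' \<subseteq> N" using I'(1) by auto
  have c3: "bsize A' * real (card N) \<le> \<alpha> * (real (card N) - real (card (N' - S')))"
  proof -
    have "card (N' - S') = card N' - card S'" using card_Diff_subset[OF fS' fe'(2)] .
    moreover have "card S' \<le> card N'" using card_mono[OF fN' fe'(2)] .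
    ultimately have cd: "real (card (N' - S')) = real (card N') - real (card S')" by simp
    have "real (card S') \<ge> ts * real (card N) / \<alpha>" using fe'(3) unfolding cohesive_def by auto
    then have tsb: "ts * real (card N) \<le> \<alpha> * real (card S')" using a by (simp add: field_simps)
    have "bsize A' \<le> bsize A + ts" unfolding A'_def using bsize_Un[OF G I'(2) fe'(4)] fe'(6) by simp
    then have "bsize A' * real (card N) \<le> (bsize A + ts) * real (card N)"
      by (simp add: mult_right_mono)
    also have "\<dots> = bsize A * real (card N) + ts * real (card N)" by (simp add: algebra_simps)
    also have "\<dots> \<le> \<alpha> * (real (card N) - real (card N')) + \<alpha> * real (card S')"
      using I'(3) tsb by linarith
    also have "\<dots> = \<alpha> * (real (card N) - real (card (N' - S')))"
      unfolding cd by (simp add: right_diff_distrib)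
    finally show ?thesis .
  qed
  have c4: "\<forall>t S B. t > 0 \<and> cohesive c G \<alpha> N R t S \<and> is_bundle c G B \<and> bsize B = t \<and>
        (\<forall>i\<in>S. bsub B (R i)) \<longrightarrow> S \<subseteq> N' - S' \<or> (\<exists>j\<in>S. util (R j) A' \<ge> t)"
  proof (intro allI impI)
    fix t S B assume h: "t > 0 \<and> cohesive c G \<alpha> N R t S \<and> is_bundle c G B \<and> bsize B = t \<and>
        (\<forall>i\<in>S. bsub B (R i))"
    have SN: "S \<subseteq> N" using h unfolding cohesive_def by auto
    have mono: "util (R j) A \<le> util (R j) A'" if "j \<in> S" for j
    proof -
      have "is_bundle c G (R j)" using R SN that by blast
      from util_mono[OF G this A'b I'(2)] show ?thesis unfolding A'_def by simp
    qed
    show "S \<subseteq> N' - S' \<or> (\<exists>j\<in>S. util (R j) A' \<ge> t)"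
    proof (cases "S \<subseteq> N'")
      case False
      then obtain j where "j \<in> S" "util (R j) A \<ge> t" using I'(4) h by blast
      then show ?thesis using mono[of j] by force
    next
      case True
      show ?thesis
      proof (cases "S \<subseteq> N' - S'")
        case True then show ?thesis by blast
      next
        case False
        then obtain j where j: "j \<in> S" "j \<in> S'" using \<open>S \<subseteq> N'\<close> by blast
        have "S \<noteq> {}" using coh_nonempty[OF a N] h by blast
        then have "greedy_feasible c G \<alpha> N R N' t S B"
          using h \<open>S \<subseteq> N'\<close> unfolding greedy_feasible_def by auto
        moreover have "\<forall>t'. 0 \<le> t' \<and> (\<exists>S B. greedy_feasible c G \<alpha> N R N' t' S B) \<longrightarrow> t' \<le> ts"
          using ts unfolding greedy_tstar_def by blast
        moreover have "0 \<le> t" using h by auto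
        ultimately have "t \<le> ts" by blast
        moreover have "util (R j) B' = ts" using util_self[of B' "R j"] fe'(5,6) j(2) by simp
        moreover have "util (R j) B' \<le> util (R j) A'"
        proof -
          have "is_bundle c G (R j)" using R SN j(1) by blast
          from util_mono[OF G this A'b fe'(4)] show ?thesis unfolding A'_def by simp
        qed
        ultimately show ?thesis using j(1) by force
      qed
    qed
  qed
  show ?thesis unfolding Inv_def st' using c1 A'b c3 c4 unfolding A'_def by auto
qed



lemma step_shape:
  assumes "greedy_step c G \<alpha> N R st st'"
  shows "\<exists>S. S \<noteq> {} \<and> S \<subseteq> fst st \<and> fst st' = fst st - S"
  using assms unfolding greedy_step_def greedy_feasible_def by auto

lemma Inv_reach:
  assumes G: "finite G" and a: "0 < \<alpha>" and N: "finite N" "N \<noteq> {}"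
    and R: "\<forall>i\<in>N. is_bundle c G (R i)"
    and r: "(greedy_step c G \<alpha> N R)\<^sup>*\<^sup>* (N, ({}, {})) st"
  shows "Inv c G \<alpha> N R st"
  using r
proof (induction rule: rtranclp_induct)
  case base
  then show ?case using Inv_init[OF N(1)] by blast
next
  case (step y z)
  then show ?case using Inv_step[OF G a N R] by blast
qed

lemma run_exists:
  assumes c: "0 \<le> c" and G: "finite G" and a: "0 < \<alpha>" and N: "finite N" "N \<noteq> {}"
    and R: "\<forall>i\<in>N. is_bundle c G (R i)"
  shows "(greedy_step c G \<alpha> N R)\<^sup>*\<^sup>* (N, ({}, {})) st \<Longrightarrow>
     \<exists>A. (greedy_step c G \<alpha> N R)\<^sup>*\<^sup>* st ({}, A)"
proof (induction "card (fst st)" arbitrary: st rule: less_induct)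
  case less
  show ?case
  proof (cases "fst st = {}")
    case True
    then have "st = ({}, snd st)" by (cases st) auto
    then show ?thesis by (metis rtranclp.rtrancl_refl)
  next
    case False
    have I: "Inv c G \<alpha> N R st" using Inv_reach[OF G a N R less.prems] .
    then have sub: "fst st \<subseteq> N" unfolding Inv_def by auto
    obtain t where t: "greedy_tstar c G \<alpha> N R (fst st) t"
      using tstar_exists[OF c G a N R sub False] by blast
    then obtain S B where fe: "greedy_feasible c G \<alpha> N R (fst st) t S B"
      unfolding greedy_tstar_def by blast
    define st' where "st' = (fst st - S, (fst (snd st) \<union> fst B, snd (snd st) \<union> snd B))"
    have stp: "greedy_step c G \<alpha> N R st st'"
      unfolding greedy_step_def st'_def using False t fe by blast
    have r': "(greedy_step c G \<alpha> N R)\<^sup>*\<^sup>* (N, ({}, {})) st'"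
      using less.prems stp by (rule rtranclp.rtrancl_into_rtrancl)
    have "S \<noteq> {}" "S \<subseteq> fst st" using fe unfolding greedy_feasible_def by auto
    moreover have "finite (fst st)" using rev_finite_subset[OF N(1) sub] .
    ultimately have "card (fst st') < card (fst st)" unfolding st'_def
      by (auto intro!: psubset_card_mono)
    then obtain A where "(greedy_step c G \<alpha> N R)\<^sup>*\<^sup>* st' ({}, A)" using less.hyps r' by blast
    then show ?thesis using stp by (meson converse_rtranclp_into_rtranclp)
  qed
qed

lemma no_infinite:
  assumes N: "finite N"
  shows "\<not> (\<exists>f. f 0 = (N, ({}, {})) \<and> (\<forall>k. greedy_step c G \<alpha> N R (f k) (f (Suc k))))"
proof
  assume "\<exists>f. f 0 = (N, ({}, {})) \<and> (\<forall>k. greedy_step c G \<alpha> N R (f k) (f (Suc k)))"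
  then obtain f where f0: "f 0 = (N, ({}, {}))" and fs: "\<forall>k. greedy_step c G \<alpha> N R (f k) (f (Suc k))"
    by blast
  have "fst (f k) \<subseteq> N \<and> card (fst (f k)) + k \<le> card N" for k
  proof (induction k)
    case 0 then show ?case using f0 by simp
  next
    case (Suc k)
    obtain S where S: "S \<noteq> {}" "S \<subseteq> fst (f k)" "fst (f (Suc k)) = fst (f k) - S"
      using step_shape[OF fs[rule_format, of k]] by blast
    have "finite (fst (f k))" using Suc rev_finite_subset[OF N] by blast
    then have "card (fst (f (Suc k))) < card (fst (f k))" using S by (auto intro!: psubset_card_mono)
    then show ?case using Suc S by auto
  qed
  from this[of "Suc (card N)"] show False by simp
qed

lemma ejr1:
  assumes c: "0 \<le> c" and G: "finite G" and a: "0 < \<alpha>" and N: "finite N" "N \<noteq> {}"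
    and R: "\<forall>i\<in>N. is_bundle c G (R i)" and E: "EJR_M c G \<alpha> N R A"
  shows "EJR_1 c G \<alpha> N R A"
  unfolding EJR_1_def
proof (intro allI impI)
  fix t S assume h: "0 < t \<and> cohesive c G \<alpha> N R t S"
  have Sne: "S \<noteq> {}" using coh_nonempty[OF a N] h by blast
  have SN: "S \<subseteq> N" using h unfolding cohesive_def by auto
  have fS: "finite S" using rev_finite_subset[OF N(1) SN] .
  show "\<exists>j\<in>S. t - 1 < util (R j) A"
  proof (cases "t < 1")
    case True
    obtain j where j: "j \<in> S" using Sne by blast
    have "0 \<le> util (R j) A" by (rule util_nonneg)
    then show ?thesis using True j by force
  next
    case False
    let ?C = "common c G R S"
    let ?K = "card (snd ?C)" and ?L = "piece_len (fst ?C)"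
    have tb: "t \<le> real ?K + ?L" using h unfolding cohesive_def bsize_def by auto
    have L0: "0 \<le> ?L" by (rule piece_len_nonneg)
    have SR: "\<forall>i\<in>S. is_bundle c G (R i)" using R SN by blast
    obtain t' where t': "t' \<in> sizes c G R S" "t - 1 < t'" "t' \<le> t" "0 < t'"
    proof (cases "real ?K \<ge> t")
      case True
      define k where "k = nat \<lfloor>t\<rfloor>"
      have k1: "real k \<le> t" "t - 1 < real k" "real k \<le> real ?K" "1 \<le> k"
        using True False unfolding k_def by linarith+
      then have "k \<le> ?K" by linarith
      then have "real k \<in> sizes c G R S" using L0 sizes_eq[OF c G fS SR] by auto
      then show ?thesis using that k1 by auto
    next
      case False
      then have "t \<in> sizes c G R S" using tb sizes_eq[OF c G fS SR] by auto
      then show ?thesis using that h by auto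
    qed
    obtain B where B: "is_bundle c G B" "\<forall>i\<in>S. bsub B (R i)" "bsize B = t'"
      using t'(1) unfolding sizes_def by blast
    have "cohesive c G \<alpha> N R t' S"
    proof -
      have "real (card S) \<ge> t * real (card N) / \<alpha>" "bsize ?C \<ge> t" using h unfolding cohesive_def by auto
      moreover have "t' * real (card N) / \<alpha> \<le> t * real (card N) / \<alpha>"
        using t'(3) a by (simp add: divide_right_mono mult_right_mono)
      ultimately show ?thesis using SN t'(3) unfolding cohesive_def by auto
    qed
    then obtain j where "j \<in> S" "util (R j) A \<ge> t'" using E t'(4) B unfolding EJR_M_def by blast
    then show ?thesis using t'(2) by force
  qed
qed



theorem mainTheorem5:
  fixes c \<alpha> :: real and G :: "'g set" and N :: "'a set" and R :: "'a \<Rightarrow> 'g bndl"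
  assumes "c \<ge> 0" and "finite G" and "max c (real (card G)) > 0"
    and "0 < \<alpha>" and "\<alpha> \<le> c + real (card G)"
    and "finite N" and "N \<noteq> {}"
    and "\<forall>i\<in>N. is_bundle c G (R i)"
  shows "(\<forall>N' A. (greedy_step c G \<alpha> N R)\<^sup>*\<^sup>* (N, ({}, {})) (N', A) \<and> N' \<noteq> {}
              \<longrightarrow> (\<exists>t. greedy_tstar c G \<alpha> N R N' t))
    \<and> \<not> (\<exists>f. f 0 = (N, ({}, {})) \<and> (\<forall>k. greedy_step c G \<alpha> N R (f k) (f (Suc k))))
    \<and> (\<exists>A. (greedy_step c G \<alpha> N R)\<^sup>*\<^sup>* (N, ({}, {})) ({}, A))
    \<and> (\<forall>A. (greedy_step c G \<alpha> N R)\<^sup>*\<^sup>* (N, ({}, {})) ({}, A) \<longrightarrow>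
           is_bundle c G A \<and> bsize A \<le> \<alpha> \<and> EJR_M c G \<alpha> N R A \<and> EJR_1 c G \<alpha> N R A)
    \<and> (\<exists>A. is_bundle c G A \<and> bsize A \<le> \<alpha> \<and> EJR_M c G \<alpha> N R A)"
proof -
  note c = assms(1) and G = assms(2) and a = assms(4) and N = assms(6,7) and R = assms(8)
  have p1: "\<forall>N' A. (greedy_step c G \<alpha> N R)\<^sup>*\<^sup>* (N, ({}, {})) (N', A) \<and> N' \<noteq> {}
              \<longrightarrow> (\<exists>t. greedy_tstar c G \<alpha> N R N' t)"
  proof (intro allI impI)
    fix N' A assume h: "(greedy_step c G \<alpha> N R)\<^sup>*\<^sup>* (N, ({}, {})) (N', A) \<and> N' \<noteq> {}"
    then have "Inv c G \<alpha> N R (N', A)" using Inv_reach[OF G a N R] by blast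
    then have "N' \<subseteq> N" unfolding Inv_def by simp
    then show "\<exists>t. greedy_tstar c G \<alpha> N R N' t" using tstar_exists[OF c G a N R] h by blast
  qed
  have p2: "\<not> (\<exists>f. f 0 = (N, ({}, {})) \<and> (\<forall>k. greedy_step c G \<alpha> N R (f k) (f (Suc k))))"
    using no_infinite[OF N(1)] .
  have p3: "\<exists>A. (greedy_step c G \<alpha> N R)\<^sup>*\<^sup>* (N, ({}, {})) ({}, A)"
    using run_exists[OF c G a N R, of "(N, ({}, {}))"] by simp
  have p4: "\<forall>A. (greedy_step c G \<alpha> N R)\<^sup>*\<^sup>* (N, ({}, {})) ({}, A) \<longrightarrow>
           is_bundle c G A \<and> bsize A \<le> \<alpha> \<and> EJR_M c G \<alpha> N R A \<and> EJR_1 c G \<alpha> N R A"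
  proof (intro allI impI)
    fix A assume "(greedy_step c G \<alpha> N R)\<^sup>*\<^sup>* (N, ({}, {})) ({}, A)"
    then have I: "Inv c G \<alpha> N R ({}, A)" using Inv_reach[OF G a N R] by blast
    then have b: "is_bundle c G A" unfolding Inv_def by simp
    have n: "0 < real (card N)" using N by auto
    have "bsize A * real (card N) \<le> \<alpha> * real (card N)" using I unfolding Inv_def by simp
    then have s: "bsize A \<le> \<alpha>" using n by simp
    have E: "EJR_M c G \<alpha> N R A"
      unfolding EJR_M_def
    proof (intro allI impI)
      fix t S assume h: "0 < t \<and> cohesive c G \<alpha> N R t S \<and>
        (\<exists>B. is_bundle c G B \<and> bsize B = t \<and> (\<forall>i\<in>S. bsub B (R i)))"
      then obtain B where "is_bundle c G B \<and> bsize B = t \<and> (\<forall>i\<in>S. bsub B (R i))" by blast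
      then have "S \<subseteq> {} \<or> (\<exists>j\<in>S. util (R j) A \<ge> t)" using I h unfolding Inv_def by simp
      moreover have "S \<noteq> {}" using coh_nonempty[OF a N] h by blast
      ultimately show "\<exists>j\<in>S. t \<le> util (R j) A" by blast
    qed
    show "is_bundle c G A \<and> bsize A \<le> \<alpha> \<and> EJR_M c G \<alpha> N R A \<and> EJR_1 c G \<alpha> N R A"
      using b s E ejr1[OF c G a N R E] by blast
  qed
  have p5: "\<exists>A. is_bundle c G A \<and> bsize A \<le> \<alpha> \<and> EJR_M c G \<alpha> N R A" using p3 p4 by blast
  show ?thesis using p1 p2 p3 p4 p5 by blast
qed


end
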